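(* Let $M$ be a $*$-left Ehresmann monoid with $M=\langle H\rangle_{(2)}$ for an atomic subset $H$. If $m=h_1h_2\cdots h_n$ with $h_i\in H$ for $1\le i\le n$, then $m$ has an expression $m=k_1\cdots k_p$ in $H$-canonical form with $p\le n$.
   Context: A $*$-left Ehresmann monoid is a monoid $M$ with unary operations $+,*$ such that $x^+x=x$, $(x^+y^+)^+=x^+y^+$, $x^+y^+=y^+x^+$, $(xy)^+=(xy^+)^+$, $xx^*=x$, $(x^* )^*=x^*$, $x^*y^*=y^*x^*$, $(xy^* )^*y^*=(xy^* )^*$, $(x^* )^+=x^*$, $(x^+)^*=x^+$. Projections: $E=\{a^+\}=\{a^*\}$, ordered by $e\le f$ iff $ef=e$; $\sigma$ is the least monoid congruence containing $E\times E$; $\langle H\rangle_{(2)}$ is the subsemigroup generated by $H$. $H$ is atomic if: (H1) $E\subseteq H$; (H2) $h\in H,e\in E$ imply $he\in H$ and $(he)^*=h^*e$; (H3) if $h\in H$, $k\in H\setminus E$, $h^*\ge k^+$ then $hk\in H$ and $(hk)^*=k^*$; (H4) every $m\in M$ is $\sigma$-related to some $h\in H$; (H5) if $h,k,w\in H$, $hk\,\sigma\,w$ and $k^*=w^*$, then some $u\in H$ has $u\,\sigma\,h$ and $u^*\ge k^+$. An expression $m=h_1\cdots h_n$ ($n\ge1$, $h_i\in H$) is in $H$-canonical form if $h_i^*<h_{i+1}^+$ for $1\le i<n$ and $h_i\notin E$ for $2\le i\le n$. *)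

theory Defs
  imports Main
begin

text \<open>A *-left Ehresmann monoid on the whole type 'a, given by multiplication mul,
identity one, and unary operations pl (the plus) and st (the star).\<close>

definition star_left_ehresmann ::
  "('a \<Rightarrow> 'a \<Rightarrow> 'a) \<Rightarrow> 'a \<Rightarrow> ('a \<Rightarrow> 'a) \<Rightarrow> ('a \<Rightarrow> 'a) \<Rightarrow> bool" where
  "star_left_ehresmann mul one pl st \<longleftrightarrow>
     (\<forall>x y z. mul (mul x y) z = mul x (mul y z)) \<and>
     (\<forall>x. mul one x = x \<and> mul x one = x) \<and>
     (\<forall>x. mul (pl x) x = x) \<and>
     (\<forall>x y. pl (mul (pl x) (pl y)) = mul (pl x) (pl y)) \<and>
     (\<forall>x y. mul (pl x) (pl y) = mul (pl y) (pl x)) \<and>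
     (\<forall>x y. pl (mul x y) = pl (mul x (pl y))) \<and>
     (\<forall>x. mul x (st x) = x) \<and>
     (\<forall>x. st (st x) = st x) \<and>
     (\<forall>x y. mul (st x) (st y) = mul (st y) (st x)) \<and>
     (\<forall>x y. mul (st (mul x (st y))) (st y) = st (mul x (st y))) \<and>
     (\<forall>x. pl (st x) = st x) \<and>
     (\<forall>x. st (pl x) = pl x)"

definition projections :: "('a \<Rightarrow> 'a) \<Rightarrow> 'a set" where
  "projections pl = {e. \<exists>a. e = pl a}"

definition proj_le :: "('a \<Rightarrow> 'a \<Rightarrow> 'a) \<Rightarrow> 'a \<Rightarrow> 'a \<Rightarrow> bool" where
  "proj_le mul e f \<longleftrightarrow> mul e f = e"

definition proj_less :: "('a \<Rightarrow> 'a \<Rightarrow> 'a) \<Rightarrow> 'a \<Rightarrow> 'a \<Rightarrow> bool" where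
  "proj_less mul e f \<longleftrightarrow> proj_le mul e f \<and> e \<noteq> f"

definition monoid_congruence :: "('a \<Rightarrow> 'a \<Rightarrow> 'a) \<Rightarrow> ('a \<times> 'a) set \<Rightarrow> bool" where
  "monoid_congruence mul R \<longleftrightarrow> equiv UNIV R \<and>
     (\<forall>a b c. (a, b) \<in> R \<longrightarrow> (mul c a, mul c b) \<in> R \<and> (mul a c, mul b c) \<in> R)"

definition sigma :: "('a \<Rightarrow> 'a \<Rightarrow> 'a) \<Rightarrow> ('a \<Rightarrow> 'a) \<Rightarrow> 'a \<Rightarrow> 'a \<Rightarrow> bool" where
  "sigma mul pl x y \<longleftrightarrow>
     (\<forall>R. monoid_congruence mul R \<and> projections pl \<times> projections pl \<subseteq> R \<longrightarrow> (x, y) \<in> R)"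

inductive_set subsemigroup_gen :: "('a \<Rightarrow> 'a \<Rightarrow> 'a) \<Rightarrow> 'a set \<Rightarrow> 'a set"
  for mul :: "'a \<Rightarrow> 'a \<Rightarrow> 'a" and H :: "'a set" where
  gen: "h \<in> H \<Longrightarrow> h \<in> subsemigroup_gen mul H"
| mult: "a \<in> subsemigroup_gen mul H \<Longrightarrow> b \<in> subsemigroup_gen mul H \<Longrightarrow>
           mul a b \<in> subsemigroup_gen mul H"

definition atomic ::
  "('a \<Rightarrow> 'a \<Rightarrow> 'a) \<Rightarrow> ('a \<Rightarrow> 'a) \<Rightarrow> ('a \<Rightarrow> 'a) \<Rightarrow> 'a set \<Rightarrow> bool" where
  "atomic mul pl st H \<longleftrightarrow>
     projections pl \<subseteq> H \<and>
     (\<forall>h e. h \<in> H \<and> e \<in> projections pl \<longrightarrow>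
        mul h e \<in> H \<and> st (mul h e) = mul (st h) e) \<and>
     (\<forall>h k. h \<in> H \<and> k \<in> H - projections pl \<and> proj_le mul (pl k) (st h) \<longrightarrow>
        mul h k \<in> H \<and> st (mul h k) = st k) \<and>
     (\<forall>m. \<exists>h\<in>H. sigma mul pl m h) \<and>
     (\<forall>h k w. h \<in> H \<and> k \<in> H \<and> w \<in> H \<and> sigma mul pl (mul h k) w \<and> st k = st w \<longrightarrow>
        (\<exists>u\<in>H. sigma mul pl u h \<and> proj_le mul (pl k) (st u)))"

fun lprod :: "('a \<Rightarrow> 'a \<Rightarrow> 'a) \<Rightarrow> 'a \<Rightarrow> 'a list \<Rightarrow> 'a" where
  "lprod mul one [] = one"
| "lprod mul one [h] = h"
| "lprod mul one (h # hs) = mul h (lprod mul one hs)"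

definition canonical_form ::
  "('a \<Rightarrow> 'a \<Rightarrow> 'a) \<Rightarrow> ('a \<Rightarrow> 'a) \<Rightarrow> ('a \<Rightarrow> 'a) \<Rightarrow> 'a set \<Rightarrow> 'a list \<Rightarrow> bool" where
  "canonical_form mul pl st H ks \<longleftrightarrow>
     ks \<noteq> [] \<and> set ks \<subseteq> H \<and>
     (\<forall>i. i + 1 < length ks \<longrightarrow> proj_less mul (st (ks ! i)) (pl (ks ! (i + 1)))) \<and>
     (\<forall>i. 1 \<le> i \<and> i < length ks \<longrightarrow> ks ! i \<notin> projections pl)"

end

theory Submission
  imports Defs
begin

lemma canon_cons:
  "canonical_form mul pl st H (k # rest) \<longleftrightarrow>
     k \<in> H \<and> (rest = [] \<or> (canonical_form mul pl st H rest \<and>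
        proj_less mul (st k) (pl (hd rest)) \<and> hd rest \<notin> projections pl))"
proof (cases rest)
  case Nil
  then show ?thesis by (simp add: canonical_form_def)
next
  case (Cons r rs)
  show ?thesis
  proof
    assume A: "canonical_form mul pl st H (k # rest)"
    have "\<forall>i. i + 1 < length rest \<longrightarrow> proj_less mul (st (rest ! i)) (pl (rest ! (i + 1)))"
    proof (intro allI impI)
      fix i assume "i + 1 < length rest"
      then show "proj_less mul (st (rest ! i)) (pl (rest ! (i + 1)))"
        using A unfolding canonical_form_def by (metis Suc_eq_plus1 length_Cons Suc_less_eq nth_Cons_Suc)
    qed
    moreover have "\<forall>i. 1 \<le> i \<and> i < length rest \<longrightarrow> rest ! i \<notin> projections pl"
      using A unfolding canonical_form_def by (metis Suc_less_eq le_SucI length_Cons nth_Cons_Suc plus_1_eq_Suc)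
    moreover have "proj_less mul (st k) (pl (hd rest))"
      using A Cons unfolding canonical_form_def by (metis One_nat_def add_Suc_shift add_is_0 hd_conv_nth length_Cons less_add_Suc1 list.distinct(1) nth_Cons_0 nth_Cons_Suc plus_1_eq_Suc zero_less_Suc)
    moreover have "hd rest \<notin> projections pl"
      using A Cons unfolding canonical_form_def by fastforce
    ultimately show "k \<in> H \<and> (rest = [] \<or> (canonical_form mul pl st H rest \<and>
        proj_less mul (st k) (pl (hd rest)) \<and> hd rest \<notin> projections pl))"
      using A Cons unfolding canonical_form_def by auto
  next
    assume B: "k \<in> H \<and> (rest = [] \<or> (canonical_form mul pl st H rest \<and>
        proj_less mul (st k) (pl (hd rest)) \<and> hd rest \<notin> projections pl))"
    then have C: "canonical_form mul pl st H rest" "proj_less mul (st k) (pl (hd rest))"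
        "hd rest \<notin> projections pl" using Cons by auto
    have "\<forall>i. i + 1 < length (k # rest) \<longrightarrow> proj_less mul (st ((k # rest) ! i)) (pl ((k # rest) ! (i + 1)))"
    proof (intro allI impI)
      fix i assume "i + 1 < length (k # rest)"
      then show "proj_less mul (st ((k # rest) ! i)) (pl ((k # rest) ! (i + 1)))"
        using C Cons unfolding canonical_form_def
        by (cases i) auto
    qed
    moreover have "\<forall>i. 1 \<le> i \<and> i < length (k # rest) \<longrightarrow> (k # rest) ! i \<notin> projections pl"
    proof (intro allI impI)
      fix i assume "1 \<le> i \<and> i < length (k # rest)"
      then obtain j where j: "i = Suc j" "j < length rest" by (cases i) auto
      show "(k # rest) ! i \<notin> projections pl"
      proof (cases j)
        case 0 then show ?thesis using j C Cons by simp
      next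
        case (Suc j') then show ?thesis using j C unfolding canonical_form_def by auto
      qed
    qed
    ultimately show "canonical_form mul pl st H (k # rest)"
      using B C unfolding canonical_form_def by auto
  qed
qed

lemma insert_lemma:
  assumes S: "star_left_ehresmann mul one pl st"
    and A: "atomic mul pl st H"
    and h: "h \<in> H"
    and K: "canonical_form mul pl st H ks"
  shows "\<exists>ks'. canonical_form mul pl st H ks' \<and> lprod mul one ks' = mul h (lprod mul one ks)
             \<and> length ks' \<le> Suc (length ks)"
proof -
  have as: "\<And>x y z. mul (mul x y) z = mul x (mul y z)"
   and pp: "\<And>x. mul (pl x) x = x"
   and plprod: "\<And>x y. pl (mul (pl x) (pl y)) = mul (pl x) (pl y)"
   and com: "\<And>x y. mul (pl x) (pl y) = mul (pl y) (pl x)"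
   and ss: "\<And>x. mul x (st x) = x"
   and sst: "\<And>x. st (st x) = st x"
   and plst: "\<And>x. pl (st x) = st x"
   and stpl: "\<And>x. st (pl x) = pl x"
    using S unfolding star_left_ehresmann_def by blast+
  have AA: "projections pl \<subseteq> H \<and>
     (\<forall>h e. h \<in> H \<and> e \<in> projections pl \<longrightarrow>
        mul h e \<in> H \<and> st (mul h e) = mul (st h) e) \<and>
     (\<forall>h k. h \<in> H \<and> k \<in> H - projections pl \<and> proj_le mul (pl k) (st h) \<longrightarrow>
        mul h k \<in> H \<and> st (mul h k) = st k)" using A unfolding atomic_def by blast
  have H1: "projections pl \<subseteq> H" using AA by blast
  have H2: "\<And>h e. h \<in> H \<Longrightarrow> e \<in> projections pl \<Longrightarrow> mul h e \<in> H \<and> st (mul h e) = mul (st h) e"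
    using AA by blast
  have H3: "\<And>h k. h \<in> H \<Longrightarrow> k \<in> H \<Longrightarrow> k \<notin> projections pl \<Longrightarrow> proj_le mul (pl k) (st h) \<Longrightarrow>
        mul h k \<in> H \<and> st (mul h k) = st k"
    using AA by blast
  have projI: "\<And>x. pl x \<in> projections pl" unfolding projections_def by blast
  have plpl: "\<And>x. pl (pl x) = pl x" proof - fix x show "pl (pl x) = pl x" using plst[of "pl x"] by (simp only: stpl) qed
  have stE: "\<And>x. st x \<in> projections pl" unfolding projections_def
    by (rule CollectI, rule_tac x="st x" in exI, simp add: plst)
  have Epl: "\<And>e. e \<in> projections pl \<Longrightarrow> pl e = e"
  proof -
    fix e assume "e \<in> projections pl"
    then obtain a where "e = pl a" unfolding projections_def by blast
    then show "pl e = e" using plpl by simp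
  qed
  have Est: "\<And>e. e \<in> projections pl \<Longrightarrow> st e = e"
  proof -
    fix e assume "e \<in> projections pl"
    then obtain a where "e = pl a" unfolding projections_def by blast
    then show "st e = e" using stpl by simp
  qed
  have Eid: "\<And>e. e \<in> projections pl \<Longrightarrow> mul e e = e"
  proof -
    fix e assume "e \<in> projections pl"
    then have "pl e = e" by (rule Epl)
    then show "mul e e = e" using pp[of e] by simp
  qed
  have Ecom: "\<And>e f. e \<in> projections pl \<Longrightarrow> f \<in> projections pl \<Longrightarrow> mul e f = mul f e"
  proof -
    fix e f assume "e \<in> projections pl" "f \<in> projections pl"
    then have "pl e = e" "pl f = f" using Epl by blast+
    then show "mul e f = mul f e" using com[of e f] by simp
  qed
  have Emul: "\<And>e f. e \<in> projections pl \<Longrightarrow> f \<in> projections pl \<Longrightarrow> mul e f \<in> projections pl"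
  proof -
    fix e f assume "e \<in> projections pl" "f \<in> projections pl"
    then have "pl e = e" "pl f = f" using Epl by blast+
    then have "pl (mul e f) = mul e f" using plprod[of e f] by simp
    then show "mul e f \<in> projections pl" using projI[of "mul e f"] by simp
  qed
  obtain k1 rest where ks: "ks = k1 # rest" using K unfolding canonical_form_def
    by (cases ks) auto
  have k1H: "k1 \<in> H" using K ks unfolding canonical_form_def by auto
  have Kc: "rest = [] \<or> (canonical_form mul pl st H rest \<and>
        proj_less mul (st k1) (pl (hd rest)) \<and> hd rest \<notin> projections pl)"
    using K unfolding ks canon_cons by simp
  have lp: "\<And>x xs. lprod mul one (x # xs) = (if xs = [] then x else mul x (lprod mul one xs))"
    by (case_tac xs) auto
  show ?thesis
  proof (cases "k1 \<in> projections pl")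
    case True
    have n: "mul h k1 \<in> H" "st (mul h k1) = mul (st h) k1" using H2[OF h True] by auto
    have "canonical_form mul pl st H (mul h k1 # rest)"
      unfolding canon_cons
    proof (intro conjI n(1))
      show "rest = [] \<or> (canonical_form mul pl st H rest \<and>
        proj_less mul (st (mul h k1)) (pl (hd rest)) \<and> hd rest \<notin> projections pl)"
      proof (cases "rest = []")
        case False
        then have c: "canonical_form mul pl st H rest" "proj_less mul (st k1) (pl (hd rest))"
            "hd rest \<notin> projections pl" using Kc by auto
        let ?f = "pl (hd rest)"
        have l1: "mul k1 ?f = k1" "k1 \<noteq> ?f" using c(2) Est[OF True] unfolding proj_less_def proj_le_def by auto
        have l2: "mul (mul (st h) k1) ?f = mul (st h) k1" using l1 by (simp add: as)
        have l3: "mul (st h) k1 \<noteq> ?f"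
        proof
          assume e: "mul (st h) k1 = ?f"
          have "mul k1 ?f = mul k1 (mul (st h) k1)" using e by simp
          also have "\<dots> = mul (mul k1 (st h)) k1" by (simp add: as)
          also have "\<dots> = mul (mul (st h) k1) k1" using Ecom[OF True stE] by simp
          also have "\<dots> = mul (st h) k1" using Eid[OF True] by (simp add: as)
          finally show False using e l1 by simp
        qed
        show ?thesis using c l2 l3 n(2) unfolding proj_less_def proj_le_def by auto
      qed simp
    qed
    moreover have "lprod mul one (mul h k1 # rest) = mul h (lprod mul one ks)"
      using ks by (simp add: lp as)
    ultimately show ?thesis using ks by (intro exI[of _ "mul h k1 # rest"]) auto
  next
    case False
    define g where "g = mul (st h) (pl k1)"
    have gE: "g \<in> projections pl" unfolding g_def using Emul stE projI by metis
    have h'H: "mul h g \<in> H" and h's: "st (mul h g) = mul (st h) g" using H2[OF h gE] by auto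
    have h's2: "st (mul h g) = g" using h's unfolding g_def by (simp add: as[symmetric] Eid[OF stE])
    have gle: "mul g (pl k1) = g" unfolding g_def by (simp add: as Eid[OF projI])
    have ss2: "\<And>x y. mul x (mul (st x) y) = mul x y" using as ss by metis
    have prod: "mul (mul h g) k1 = mul h k1" unfolding g_def by (simp add: as pp ss2)
    show ?thesis
    proof (cases "g = pl k1")
      case True
      have le: "proj_le mul (pl k1) (st (mul h g))" using h's2 True Eid[OF projI] unfolding proj_le_def by simp
      have n: "mul (mul h g) k1 \<in> H" "st (mul (mul h g) k1) = st k1" using H3[OF h'H k1H False le] by auto
      have "canonical_form mul pl st H (mul (mul h g) k1 # rest)"
        using Kc n unfolding canon_cons by auto
      moreover have "lprod mul one (mul (mul h g) k1 # rest) = mul h (lprod mul one ks)"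
        using ks prod by (simp add: lp as[symmetric])
      ultimately show ?thesis using ks by (intro exI[of _ "mul (mul h g) k1 # rest"]) auto
    next
      case gne: False
      have "canonical_form mul pl st H (mul h g # ks)"
        unfolding canon_cons using h'H K ks False h's2 gle gne
        unfolding proj_less_def proj_le_def by auto
      moreover have "lprod mul one (mul h g # ks) = mul h (lprod mul one ks)"
        using ks prod by (simp add: lp as[symmetric])
      ultimately show ?thesis by (intro exI[of _ "mul h g # ks"]) auto
    qed
  qed
qed

theorem mainTheorem9:
  fixes mul :: "'a \<Rightarrow> 'a \<Rightarrow> 'a" and one :: 'a and pl st :: "'a \<Rightarrow> 'a"
    and H :: "'a set" and hs :: "'a list"
  assumes "star_left_ehresmann mul one pl st"
    and "atomic mul pl st H"
    and "subsemigroup_gen mul H = UNIV"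
    and "hs \<noteq> []" and "set hs \<subseteq> H"
  shows "\<exists>ks. canonical_form mul pl st H ks \<and> lprod mul one ks = lprod mul one hs
             \<and> length ks \<le> length hs"
  using assms(4,5)
proof (induction hs)
  case Nil
  then show ?case by simp
next
  case (Cons h t)
  show ?case
  proof (cases "t = []")
    case True
    then show ?thesis using Cons.prems
      by (intro exI[of _ "[h]"]) (simp add: canonical_form_def)
  next
    case False
    then obtain ks where ks: "canonical_form mul pl st H ks" "lprod mul one ks = lprod mul one t"
        "length ks \<le> length t" using Cons by auto
    obtain ks' where "canonical_form mul pl st H ks'" "lprod mul one ks' = mul h (lprod mul one ks)"
        "length ks' \<le> Suc (length ks)"
      using insert_lemma[OF assms(1,2) _ ks(1), of h] Cons.prems by auto
    then show ?thesis using ks False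
      by (intro exI[of _ ks']) (cases t; auto)
  qed
qed

end
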